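(* Let $d\ge1$ and let $G$ and $H$ be ordered graphs, each with $m$ edges, such that $M^{\mathbb E}_{d,G}=M^{\mathbb E}_{d,H}$. Then the edge bijection sending the $k$-th edge of $G$ to the $k$-th edge of $H$ is a cycle isomorphism.
   Context: An ordered graph is a finite vertex set with a sequence $(E_1,\dots,E_m)$ of distinct unordered pairs of distinct vertices. For a real configuration $\mathbf p$ in $\mathbb R^d$, $m^{\mathbb E}_G(\mathbf p)\in\mathbb R^m$ has $k$-th coordinate $\|\mathbf p_i-\mathbf p_j\|^2$ with $E_k=\{i,j\}$; $M^{\mathbb E}_{d,G}$ is the image of $m^{\mathbb E}_G$ over all real configurations in $\mathbb R^d$. A set of edges is cycle supported if its edges, in some order, form a simple cycle. An edge bijection between two graphs is a cycle isomorphism if a set of edges is cycle supported exactly when its image is cycle supported. *)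

theory Defs
  imports "HOL-Analysis.Analysis"
begin

definition ordered_graph :: "'a set \<Rightarrow> ('a \<times> 'a) list \<Rightarrow> bool" where
  "ordered_graph V E \<longleftrightarrow> finite V \<and>
     (\<forall>e\<in>set E. fst e \<in> V \<and> snd e \<in> V \<and> fst e \<noteq> snd e) \<and>
     distinct (map (\<lambda>e. {fst e, snd e}) E)"

definition meas :: "('a \<times> 'a) list \<Rightarrow> ('a \<Rightarrow> real ^ 'n) \<Rightarrow> real list" where
  "meas E p = map (\<lambda>e. (norm (p (fst e) - p (snd e)))\<^sup>2) E"

text \<open>M^E_{d,G}: image of the measurement map over all configurations in R^d,
where d = CARD('n).\<close>
definition meas_set :: "('a \<times> 'a) list \<Rightarrow> 'n::finite itself \<Rightarrow> real list set" where
  "meas_set E _ = range (meas E :: ('a \<Rightarrow> real ^ 'n) \<Rightarrow> real list)"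

definition is_simple_cycle_edges :: "'a set \<Rightarrow> 'a set set \<Rightarrow> bool" where
  "is_simple_cycle_edges V S \<longleftrightarrow> (\<exists>vs. length vs \<ge> 3 \<and> distinct vs \<and> set vs \<subseteq> V \<and>
      S = {{vs ! i, vs ! ((i + 1) mod length vs)} | i. i < length vs})"

definition cycle_supported :: "'a set \<Rightarrow> ('a \<times> 'a) list \<Rightarrow> nat set \<Rightarrow> bool" where
  "cycle_supported V E K \<longleftrightarrow> K \<subseteq> {..<length E} \<and>
     is_simple_cycle_edges V ((\<lambda>k. {fst (E ! k), snd (E ! k)}) ` K)"

end

theory Submission imports Defs "HOL-Library.Transitive_Closure_Table"
begin
definition Rp :: "'a set set \<Rightarrow> 'a \<Rightarrow> 'a \<Rightarrow> bool" where
  "Rp S u w \<longleftrightarrow> {u,w} \<in> S"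

definition Dp :: "'a set set \<Rightarrow> bool" where
  "Dp S \<longleftrightarrow> (\<exists>a b. {a,b} \<in> S \<and> a \<noteq> b \<and> (Rp (S - {{a,b}}))\<^sup>*\<^sup>* a b)"

lemma Rp_sym: "(Rp S)\<^sup>*\<^sup>* u w \<Longrightarrow> (Rp S)\<^sup>*\<^sup>* w u"
proof (induction rule: rtranclp_induct)
  case base then show ?case by simp
next
  case (step y z)
  have "Rp S z y" using step(2) by (simp add: Rp_def insert_commute)
  then show ?case using step(3) by (rule converse_rtranclp_into_rtranclp)
qed

lemma Rp_mono: "S \<subseteq> T \<Longrightarrow> (Rp S)\<^sup>*\<^sup>* u w \<Longrightarrow> (Rp T)\<^sup>*\<^sup>* u w"
  by (rule rtranclp_mono[THEN predicate2D, of "Rp S" "Rp T"]) (auto simp: Rp_def)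

lemma dnth: "distinct vs \<Longrightarrow> i < length vs \<Longrightarrow> j < length vs \<Longrightarrow> vs ! i = vs ! j \<Longrightarrow> i = j"
  by (simp add: nth_eq_iff_index_eq)

lemma cyc_D:
  assumes n: "length vs \<ge> 3" and d: "distinct vs"
    and S: "S = {{vs ! i, vs ! ((i + 1) mod length vs)} | i. i < length vs}"
  shows "Dp S"
proof -
  define n where "n = length vs"
  define a where "a = vs ! (n - 1)"
  define b where "b = vs ! 0"
  have e: "{a,b} \<in> S" unfolding S a_def b_def n_def
    apply (rule CollectI) apply (rule exI[of _ "length vs - 1"])
    using n by (subgoal_tac "Suc (length vs - Suc 0) = length vs") auto
  have ab: "a \<noteq> b" unfolding a_def b_def n_def using n d by (subst nth_eq_iff_index_eq) auto
  have "\<forall>j<n. (Rp (S - {{a,b}}))\<^sup>*\<^sup>* b (vs ! j)"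
  proof (intro allI impI)
    fix j assume "j < n"
    then show "(Rp (S - {{a,b}}))\<^sup>*\<^sup>* b (vs ! j)"
    proof (induction j)
      case 0 then show ?case by (simp add: b_def)
    next
      case (Suc j)
      have mem: "{vs ! j, vs ! Suc j} \<in> S" unfolding S
        apply (rule CollectI) apply (rule exI[of _ j]) using Suc.prems n_def by auto
      have ne: "{vs ! j, vs ! Suc j} \<noteq> {a,b}"
      proof
        assume eq: "{vs ! j, vs ! Suc j} = {a,b}"
        have jl: "j < n" "Suc j < n" using Suc.prems by auto
        from eq have "vs ! j = a \<or> vs ! j = b" by auto
        then show False
        proof
          assume "vs ! j = a" then have "j = n - 1" using dnth[OF d, of j "n - 1"] jl n_def a_def by auto
          then show False using jl by simp
        next
          assume "vs ! j = b" then have j0: "j = 0" using dnth[OF d, of j 0] jl n_def b_def by (cases vs) auto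
          from eq have "vs ! Suc j = a \<or> vs ! Suc j = b" by auto
          then show False
          proof
            assume "vs ! Suc j = a" then have "Suc j = n - 1" using dnth[OF d, of "Suc j" "n - 1"] jl n_def a_def by auto
            then show False using j0 n n_def by simp
          next
            assume "vs ! Suc j = b" then have "Suc j = 0" using dnth[OF d, of "Suc j" 0] jl n_def b_def by (cases vs) auto
            then show False by simp
          qed
        qed
      qed
      have "Rp (S - {{a,b}}) (vs ! j) (vs ! Suc j)" using mem ne by (simp add: Rp_def)
      with Suc show ?case by (meson Suc_lessD rtranclp.rtrancl_into_rtrancl)
    qed
  qed
  then have "(Rp (S - {{a,b}}))\<^sup>*\<^sup>* b a" unfolding a_def using n n_def by simp
  then have "(Rp (S - {{a,b}}))\<^sup>*\<^sup>* a b" by (rule Rp_sym)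
  then show ?thesis unfolding Dp_def using e ab by blast
qed

lemma cyc_cut:
  assumes d: "distinct vs" and n: "length vs \<ge> 3"
    and S: "S = {{vs ! i, vs ! ((i + 1) mod length vs)} | i. i < length vs}"
    and ij: "i < length vs" "j < length vs" "i \<noteq> j"
  shows "\<not> (Rp (S - {{vs ! i, vs ! ((i + 1) mod length vs)}, {vs ! j, vs ! ((j + 1) mod length vs)}}))\<^sup>*\<^sup>*
            (vs ! i) (vs ! ((i + 1) mod length vs))"
proof
  define n where "n = length vs"
  define T where "T = S - {{vs ! i, vs ! ((i + 1) mod length vs)}, {vs ! j, vs ! ((j + 1) mod length vs)}}"
  define P where "P v \<longleftrightarrow> (\<exists>t<n. v = vs ! t \<and> (i < t) \<noteq> (j < t))" for v
  have n0: "0 < n" using n n_def by linarith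
  have Pn: "P (vs ! s) \<longleftrightarrow> (i < s) \<noteq> (j < s)" if "s < n" for s
    unfolding P_def using that dnth[OF d] n_def by blast
  have step: "P u = P w" if "Rp T u w" for u w
  proof -
    from that obtain t where t: "t < n" "{u,w} = {vs ! t, vs ! ((t + 1) mod n)}"
      "{u,w} \<noteq> {vs ! i, vs ! ((i + 1) mod n)}" "{u,w} \<noteq> {vs ! j, vs ! ((j + 1) mod n)}"
      unfolding Rp_def T_def S n_def by auto
    have ti: "t \<noteq> i" and tj: "t \<noteq> j" using t by auto
    have "P (vs ! t) = P (vs ! ((t + 1) mod n))"
    proof (cases "Suc t < n")
      case True
      then show ?thesis using Pn[of t] Pn[of "Suc t"] ti tj t(1) by auto
    next
      case False
      then have "Suc t = n" using t(1) by simp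
      then have "(t + 1) mod n = 0" by simp
      then show ?thesis using Pn[of t] Pn[of 0] ti tj t(1) ij \<open>Suc t = n\<close> n_def n0 by auto
    qed
    moreover have "(u = vs ! t \<and> w = vs ! ((t + 1) mod n)) \<or> (w = vs ! t \<and> u = vs ! ((t + 1) mod n))"
      using t(2) by (metis doubleton_eq_iff)
    ultimately show ?thesis by auto
  qed
  have inv: "(Rp T)\<^sup>*\<^sup>* u w \<Longrightarrow> P u = P w" for u w
    by (induction rule: rtranclp_induct) (auto dest: step)
  have ne: "P (vs ! i) \<noteq> P (vs ! ((i + 1) mod n))"
  proof (cases "Suc i < n")
    case True
    then show ?thesis using Pn[of i] Pn[of "Suc i"] ij n_def by auto
  next
    case False
    then have "Suc i = n" using ij n_def by simp
    then have "(i + 1) mod n = 0" by simp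
    then show ?thesis using Pn[of i] Pn[of 0] ij \<open>Suc i = n\<close> n_def n0 by auto
  qed
  assume "(Rp (S - {{vs ! i, vs ! ((i + 1) mod length vs)}, {vs ! j, vs ! ((j + 1) mod length vs)}}))\<^sup>*\<^sup>*
            (vs ! i) (vs ! ((i + 1) mod length vs))"
  then have "(Rp T)\<^sup>*\<^sup>* (vs ! i) (vs ! ((i + 1) mod n))" unfolding T_def n_def .
  then show False using inv ne by blast
qed

lemma cyc_noD:
  assumes d: "distinct vs" and n: "length vs \<ge> 3"
    and S: "S = {{vs ! i, vs ! ((i + 1) mod length vs)} | i. i < length vs}"
    and sub: "S' \<subset> S"
  shows "\<not> Dp S'"
proof
  assume "Dp S'"
  then obtain a b where ab: "{a,b} \<in> S'" "a \<noteq> b" "(Rp (S' - {{a,b}}))\<^sup>*\<^sup>* a b"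
    unfolding Dp_def by blast
  obtain e where e: "e \<in> S" "e \<notin> S'" using sub by blast
  then obtain j where j: "j < length vs" "e = {vs ! j, vs ! ((j + 1) mod length vs)}" using S by auto
  from ab(1) sub obtain i where i: "i < length vs" "{a,b} = {vs ! i, vs ! ((i + 1) mod length vs)}"
    using S by auto
  have "i \<noteq> j" using i j e ab(1) by auto
  have sub2: "S' - {{a,b}} \<subseteq> S - {{vs ! i, vs ! ((i + 1) mod length vs)}, {vs ! j, vs ! ((j + 1) mod length vs)}}"
    using sub e i j by auto
  have "(Rp (S - {{vs ! i, vs ! ((i + 1) mod length vs)}, {vs ! j, vs ! ((j + 1) mod length vs)}}))\<^sup>*\<^sup>* a b"
    by (rule Rp_mono[OF sub2 ab(3)])
  moreover have "(a = vs ! i \<and> b = vs ! ((i + 1) mod length vs)) \<or> (b = vs ! i \<and> a = vs ! ((i + 1) mod length vs))"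
    using i(2) by (metis doubleton_eq_iff)
  ultimately have "(Rp (S - {{vs ! i, vs ! ((i + 1) mod length vs)}, {vs ! j, vs ! ((j + 1) mod length vs)}}))\<^sup>*\<^sup>*
            (vs ! i) (vs ! ((i + 1) mod length vs))" using Rp_sym by metis
  then show False using cyc_cut[OF d n S i(1) j(1) \<open>i \<noteq> j\<close>] by blast
qed

lemma rtrancl_path_nth:
  "rtrancl_path r x xs y \<Longrightarrow> i < length xs \<Longrightarrow> r ((x # xs) ! i) (xs ! i)"
proof (induction arbitrary: i rule: rtrancl_path.induct)
  case (base x) then show ?case by simp
next
  case (step x y ys z)
  then show ?case by (cases i) (auto elim: rtrancl_path.cases)
qed

lemma rtrancl_path_last:
  "rtrancl_path r x xs y \<Longrightarrow> (x # xs) ! length xs = y"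
  by (induction rule: rtrancl_path.induct) (auto elim: rtrancl_path.cases)

lemma circ_cyc:
  assumes V: "\<Union>S \<subseteq> V" and D: "Dp S" and mn: "\<forall>S'. S' \<subset> S \<longrightarrow> \<not> Dp S'"
  shows "is_simple_cycle_edges V S"
proof -
  obtain a b where ab: "{a,b} \<in> S" "a \<noteq> b" "(Rp (S - {{a,b}}))\<^sup>*\<^sup>* a b"
    using D unfolding Dp_def by blast
  define T where "T = S - {{a,b}}"
  obtain xs0 where "rtrancl_path (Rp T) a xs0 b" using ab(3) T_def rtranclp_eq_rtrancl_path by metis
  then obtain xs where p: "rtrancl_path (Rp T) a xs b" and dx: "distinct (a # xs)"
    by (rule rtrancl_path_distinct)
  define vs where "vs = a # xs"
  define n where "n = length vs"
  have last: "vs ! length xs = b" using rtrancl_path_last[OF p] vs_def by simp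
  have xsne: "xs \<noteq> []" using last ab(2) vs_def by auto
  have len3: "n \<ge> 3"
  proof (rule ccontr)
    assume "\<not> 3 \<le> n"
    then have "length xs = 1" using xsne n_def vs_def by (simp add: Suc_le_eq) (metis Suc_leI length_greater_0_conv le_antisym not_less_eq_eq numeral_2_eq_2)
    then have "Rp T a b" using rtrancl_path_nth[OF p, of 0] last vs_def by auto
    then show False unfolding Rp_def T_def by simp
  qed
  define C where "C = {{vs ! i, vs ! ((i + 1) mod length vs)} | i. i < length vs}"
  have CS: "C \<subseteq> S"
  proof
    fix f assume "f \<in> C"
    then obtain i where i: "i < n" "f = {vs ! i, vs ! ((i + 1) mod n)}" unfolding C_def n_def by auto
    show "f \<in> S"
    proof (cases "i < length xs")
      case True
      then have "(i + 1) mod n = Suc i" using n_def vs_def by simp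
      moreover have "Rp T (vs ! i) (xs ! i)" using rtrancl_path_nth[OF p True] vs_def by simp
      ultimately show ?thesis using i vs_def unfolding Rp_def T_def by auto
    next
      case False
      then have "i = length xs" using i n_def vs_def by simp
      then have "(i + 1) mod n = 0" using n_def vs_def by simp
      then have "f = {b, a}" using i last \<open>i = length xs\<close> vs_def by simp
      then show ?thesis using ab(1) by (simp add: insert_commute)
    qed
  qed
  have dC: "Dp C" using cyc_D[OF _ _ C_def] len3 dx vs_def n_def by simp
  have "C = S" using CS mn dC by blast
  have "set vs \<subseteq> V"
  proof
    fix v assume "v \<in> set vs"
    then obtain i where "i < length vs" "v = vs ! i" by (auto simp: in_set_conv_nth)
    then have "v \<in> \<Union>C" unfolding C_def by blast
    then show "v \<in> V" using V CS by blast
  qed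
  then show ?thesis unfolding is_simple_cycle_edges_def
    using len3 dx vs_def n_def C_def \<open>C = S\<close> by blast
qed

lemma cyc_iff:
  assumes V: "\<Union>S \<subseteq> V"
  shows "is_simple_cycle_edges V S \<longleftrightarrow> Dp S \<and> (\<forall>S'. S' \<subset> S \<longrightarrow> \<not> Dp S')"
proof
  assume "is_simple_cycle_edges V S"
  then obtain vs where "length vs \<ge> 3" "distinct vs"
    "S = {{vs ! i, vs ! ((i + 1) mod length vs)} | i. i < length vs}"
    unfolding is_simple_cycle_edges_def by blast
  then show "Dp S \<and> (\<forall>S'. S' \<subset> S \<longrightarrow> \<not> Dp S')"
    using cyc_D cyc_noD by blast
next
  assume "Dp S \<and> (\<forall>S'. S' \<subset> S \<longrightarrow> \<not> Dp S')"
  then show "is_simple_cycle_edges V S" using circ_cyc[OF V] by blast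
qed

definition Zm :: "real list set \<Rightarrow> nat set \<Rightarrow> nat \<Rightarrow> bool" where
  "Zm M K k \<longleftrightarrow> (\<forall>x\<in>M. (\<forall>j\<in>K. x ! j = 0) \<longrightarrow> x ! k = 0)"
definition depM :: "real list set \<Rightarrow> nat set \<Rightarrow> bool" where
  "depM M K \<longleftrightarrow> (\<exists>k\<in>K. Zm M (K - {k}) k)"
definition PhiM :: "real list set \<Rightarrow> nat set \<Rightarrow> bool" where
  "PhiM M K \<longleftrightarrow> depM M K \<and> (\<forall>K'. K' \<subset> K \<longrightarrow> \<not> depM M K')"
definition ed :: "('a \<times> 'a) list \<Rightarrow> nat \<Rightarrow> 'a set" where
  "ed E k = {fst (E ! k), snd (E ! k)}"

lemma meas_nth: "j < length E \<Longrightarrow> meas E p ! j = (norm (p (fst (E ! j)) - p (snd (E ! j))))\<^sup>2"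
  by (simp add: meas_def)

lemma Zm_iff:
  assumes k: "k < length E" and K: "K \<subseteq> {..<length E}"
  shows "Zm (meas_set E TYPE('n::finite)) K k \<longleftrightarrow> (Rp (ed E ` K))\<^sup>*\<^sup>* (fst (E ! k)) (snd (E ! k))"
proof
  assume c: "(Rp (ed E ` K))\<^sup>*\<^sup>* (fst (E ! k)) (snd (E ! k))"
  show "Zm (meas_set E TYPE('n)) K k" unfolding Zm_def meas_set_def
  proof (intro ballI impI)
    fix x assume "x \<in> range (meas E :: ('a \<Rightarrow> real ^ 'n) \<Rightarrow> real list)"
    then obtain p :: "'a \<Rightarrow> real ^ 'n" where x: "x = meas E p" by auto
    assume z: "\<forall>j\<in>K. x ! j = 0"
    have eq: "p u = p w" if "Rp (ed E ` K) u w" for u w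
    proof -
      from that obtain j where j: "j \<in> K" "{u,w} = {fst (E ! j), snd (E ! j)}"
        unfolding Rp_def ed_def by auto
      have "p (fst (E ! j)) = p (snd (E ! j))" using z j(1) K x meas_nth[of j E p] by auto
      then show ?thesis using j(2) by (metis doubleton_eq_iff)
    qed
    have "(Rp (ed E ` K))\<^sup>*\<^sup>* u w \<Longrightarrow> p u = p w" for u w
      by (induction rule: rtranclp_induct) (auto dest: eq)
    then have "p (fst (E ! k)) = p (snd (E ! k))" using c by blast
    then show "x ! k = 0" using x meas_nth[OF k, of p] by simp
  qed
next
  assume z: "Zm (meas_set E TYPE('n)) K k"
  show "(Rp (ed E ` K))\<^sup>*\<^sup>* (fst (E ! k)) (snd (E ! k))"
  proof (rule ccontr)
    let ?a = "fst (E ! k)"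
    assume nc: "\<not> (Rp (ed E ` K))\<^sup>*\<^sup>* ?a (snd (E ! k))"
    define p :: "'a \<Rightarrow> real ^ 'n" where
      "p v = (if (Rp (ed E ` K))\<^sup>*\<^sup>* ?a v then 0 else 1) *\<^sub>R One" for v
    have "meas E p \<in> meas_set E TYPE('n)" unfolding meas_set_def by simp
    moreover have "\<forall>j\<in>K. meas E p ! j = 0"
    proof
      fix j assume j: "j \<in> K"
      have r1: "Rp (ed E ` K) (fst (E ! j)) (snd (E ! j))" and r2: "Rp (ed E ` K) (snd (E ! j)) (fst (E ! j))"
        using j unfolding Rp_def ed_def by (auto simp: insert_commute)
      have "(Rp (ed E ` K))\<^sup>*\<^sup>* ?a (fst (E ! j)) \<longleftrightarrow> (Rp (ed E ` K))\<^sup>*\<^sup>* ?a (snd (E ! j))"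
        using r1 r2 by (meson rtranclp.rtrancl_into_rtrancl)
      then have "p (fst (E ! j)) = p (snd (E ! j))" unfolding p_def by simp
      then show "meas E p ! j = 0" using meas_nth[of j E p] j K by auto
    qed
    ultimately have "meas E p ! k = 0" using z unfolding Zm_def by blast
    moreover have "p ?a = 0" "p (snd (E ! k)) = One" using nc unfolding p_def by auto
    ultimately show False using meas_nth[OF k, of p] by simp
  qed
qed

lemma ed_inj:
  assumes "ordered_graph V E"
  shows "inj_on (ed E) {..<length E}"
proof (rule inj_onI)
  fix i j assume i: "i \<in> {..<length E}" and j: "j \<in> {..<length E}" and e: "ed E i = ed E j"
  have d: "distinct (map (\<lambda>e. {fst e, snd e}) E)" using assms unfolding ordered_graph_def by blast
  have "map (\<lambda>e. {fst e, snd e}) E ! i = map (\<lambda>e. {fst e, snd e}) E ! j"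
    using i j e unfolding ed_def by simp
  then show "i = j" using d i j nth_eq_iff_index_eq[OF d, of i j] by simp
qed

lemma dep_iff:
  assumes G: "ordered_graph V E" and K: "K \<subseteq> {..<length E}"
  shows "depM (meas_set E TYPE('n::finite)) K \<longleftrightarrow> Dp (ed E ` K)"
proof
  have inj: "inj_on (ed E) {..<length E}" by (rule ed_inj[OF G])
  assume "depM (meas_set E TYPE('n)) K"
  then obtain k where k: "k \<in> K" "Zm (meas_set E TYPE('n)) (K - {k}) k" unfolding depM_def by blast
  have kl: "k < length E" using k K by auto
  have c: "(Rp (ed E ` (K - {k})))\<^sup>*\<^sup>* (fst (E ! k)) (snd (E ! k))"
    using Zm_iff[OF kl, of "K - {k}"] k K by auto
  have im: "ed E ` (K - {k}) = ed E ` K - {ed E k}"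
    using inj_on_image_set_diff[OF inj, of K "{k}"] K k by auto
  have ne: "fst (E ! k) \<noteq> snd (E ! k)" using G kl unfolding ordered_graph_def by auto
  show "Dp (ed E ` K)" unfolding Dp_def
    apply (rule exI[of _ "fst (E ! k)"], rule exI[of _ "snd (E ! k)"])
    using c im ne k(1) by (auto simp: ed_def)
next
  have inj: "inj_on (ed E) {..<length E}" by (rule ed_inj[OF G])
  assume "Dp (ed E ` K)"
  then obtain a b where ab: "{a,b} \<in> ed E ` K" "a \<noteq> b" "(Rp (ed E ` K - {{a,b}}))\<^sup>*\<^sup>* a b"
    unfolding Dp_def by blast
  then obtain k where k: "k \<in> K" "{a,b} = ed E k" by auto
  have kl: "k < length E" using k K by auto
  have im: "ed E ` (K - {k}) = ed E ` K - {ed E k}"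
    using inj_on_image_set_diff[OF inj, of K "{k}"] K k by auto
  have "(a = fst (E ! k) \<and> b = snd (E ! k)) \<or> (b = fst (E ! k) \<and> a = snd (E ! k))"
    using k(2) unfolding ed_def by (metis doubleton_eq_iff)
  then have "(Rp (ed E ` (K - {k})))\<^sup>*\<^sup>* (fst (E ! k)) (snd (E ! k))"
    using ab(3) im k(2) Rp_sym by metis
  then have "Zm (meas_set E TYPE('n)) (K - {k}) k" using Zm_iff[OF kl, of "K - {k}"] K by auto
  then show "depM (meas_set E TYPE('n)) K" unfolding depM_def using k by blast
qed

lemma Phi_iff:
  assumes G: "ordered_graph V E" and K: "K \<subseteq> {..<length E}"
  shows "PhiM (meas_set E TYPE('n::finite)) K \<longleftrightarrow> cycle_supported V E K"
proof -
  have inj: "inj_on (ed E) {..<length E}" by (rule ed_inj[OF G])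
  have V: "\<Union>(ed E ` K) \<subseteq> V" using G K unfolding ordered_graph_def ed_def by auto
  have cs: "cycle_supported V E K \<longleftrightarrow> is_simple_cycle_edges V (ed E ` K)"
    using K unfolding cycle_supported_def ed_def by simp
  have sub: "(\<forall>K'. K' \<subset> K \<longrightarrow> \<not> depM (meas_set E TYPE('n)) K') \<longleftrightarrow>
             (\<forall>S'. S' \<subset> ed E ` K \<longrightarrow> \<not> Dp S')"
  proof
    assume h: "\<forall>K'. K' \<subset> K \<longrightarrow> \<not> depM (meas_set E TYPE('n)) K'"
    show "\<forall>S'. S' \<subset> ed E ` K \<longrightarrow> \<not> Dp S'"
    proof (intro allI impI)
      fix S' assume s: "S' \<subset> ed E ` K"
      define K' where "K' = {k \<in> K. ed E k \<in> S'}"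
      have "S' = ed E ` K'" using s unfolding K'_def by blast
      moreover have "K' \<subset> K" using s unfolding K'_def by blast
      ultimately show "\<not> Dp S'" using h dep_iff[OF G, of K', where 'n='n] K by blast
    qed
  next
    assume h: "\<forall>S'. S' \<subset> ed E ` K \<longrightarrow> \<not> Dp S'"
    show "\<forall>K'. K' \<subset> K \<longrightarrow> \<not> depM (meas_set E TYPE('n)) K'"
    proof (intro allI impI)
      fix K' assume s: "K' \<subset> K"
      have "ed E ` K' \<subset> ed E ` K"
      proof -
        obtain k where "k \<in> K" "k \<notin> K'" using s by blast
        moreover have "inj_on (ed E) K" using inj K inj_on_subset by blast
        ultimately have "ed E k \<notin> ed E ` K'" using s by (meson inj_on_image_mem_iff psubset_imp_subset)
        then show ?thesis using s \<open>k \<in> K\<close> by blast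
      qed
      then show "\<not> depM (meas_set E TYPE('n)) K'" using h dep_iff[OF G, of K', where 'n='n] s K by blast
    qed
  qed
  show ?thesis unfolding PhiM_def cs cyc_iff[OF V] dep_iff[OF G K] sub ..
qed

theorem mainTheorem16:
  fixes VG :: "'a set" and EG :: "('a \<times> 'a) list"
    and VH :: "'b set" and EH :: "('b \<times> 'b) list"
    and m :: nat
  assumes "ordered_graph VG EG" and "ordered_graph VH EH"
    and "length EG = m" and "length EH = m"
    and "meas_set EG TYPE('n::finite) = meas_set EH TYPE('n)"
  shows "\<forall>K \<subseteq> {..<m}. cycle_supported VG EG K \<longleftrightarrow> cycle_supported VH EH K"
proof (intro allI impI)
  fix K assume K: "K \<subseteq> {..<m}"
  have "cycle_supported VG EG K \<longleftrightarrow> PhiM (meas_set EG TYPE('n)) K"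
    using Phi_iff[OF assms(1), of K, where 'n='n] K assms(3) by simp
  also have "\<dots> \<longleftrightarrow> PhiM (meas_set EH TYPE('n)) K" using assms(5) by simp
  also have "\<dots> \<longleftrightarrow> cycle_supported VH EH K"
    using Phi_iff[OF assms(2), of K, where 'n='n] K assms(4) by simp
  finally show "cycle_supported VG EG K \<longleftrightarrow> cycle_supported VH EH K" .
qed

end
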